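(* Let $\mathcal{X}$ be an input space, $\mathcal{Y}=\{1,\dots,C\}$ a finite label set, and $\mathcal{D}$ a distribution on $\mathcal{X}\times\mathcal{Y}$ with support $\mathrm{supp}(\mathcal{D})$; probabilities and expectations are over $(x,y)\sim\mathcal{D}$. Let $\mathcal{F},\mathcal{G}$ be classification models with differentiable model-dependent losses $\ell_{\mathcal{F}},\ell_{\mathcal{G}}:\mathcal{X}\times\mathcal{Y}\to\mathbb{R}_{\ge0}$ such that $\mathcal{F}(x)=\arg\min_y\ell_{\mathcal{F}}(x,y)$, $\mathcal{G}(x)=\arg\min_y\ell_{\mathcal{G}}(x,y)$. Assume both are $\beta$-smooth with gradient magnitude bounded by $B$: $\|\nabla_x\ell_{\mathcal{F}}(x,y)\|\le B$ and $\|\nabla_x\ell_{\mathcal{G}}(x,y)\|\le B$ for all $x\in\mathcal{X},y\in\mathcal{Y}$. Let $\mathcal{A}_U$ be an $(\alpha,\mathcal{F})$-effective untargeted attack with perturbation ball $\|\delta\|_2\le\epsilon$. Then $$\Pr\big(T_r(\mathcal{F},\mathcal{G},x)=1\big)\le\frac{\xi_{\mathcal{F}}+\xi_{\mathcal{G}}}{\ell_{\min}-\epsilon B\left(1+\sqrt{\frac{1+\overline{\mathcal{S}}(\ell_{\mathcal{F}},\ell_{\mathcal{G}})}{2}}\right)-\beta\epsilon^2},\qquad \ell_{\min}=\min_{\substack{x\in\mathcal{X},y'\in\mathcal{Y}:\\(x,y)\in\mathrm{supp}(\mathcal{D}),\,y'\neq y}}\big(\ell_{\mathcal{F}}(x,y'),\ell_{\mathcal{G}}(x,y')\big),$$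 where $\xi_{\mathcal{F}},\xi_{\mathcal{G}}$ are the empirical risks of $\mathcal{F}$ and $\mathcal{G}$.
   Context: Empirical risk: $\xi_{\mathcal{F}}=\mathbb{E}[\ell_{\mathcal{F}}(x,y)]$ (similarly $\xi_{\mathcal{G}}$). A model $\mathcal{F}$ is $\beta$-smooth if $\sup_{x_1,x_2\in\mathcal{X},y\in\mathcal{Y}}\frac{\|\nabla_x\ell_{\mathcal{F}}(x_1,y)-\nabla_x\ell_{\mathcal{F}}(x_2,y)\|_2}{\|x_1-x_2\|_2}\le\beta$. An untargeted attack maps $x$ (true label $y$) to $\mathcal{A}_U(x)=x+\delta$, $\|\delta\|_2\le\epsilon$; it is $(\alpha,\mathcal{F})$-effective if $\Pr(\mathcal{F}(\mathcal{A}_U(x))\neq y)\ge1-\alpha$. Upper loss gradient similarity: $\overline{\mathcal{S}}(\ell_{\mathcal{F}},\ell_{\mathcal{G}})=\sup_{x\in\mathcal{X},y\in\mathcal{Y}}\frac{\nabla_x\ell_{\mathcal{F}}(x,y)\cdot\nabla_x\ell_{\mathcal{G}}(x,y)}{\|\nabla_x\ell_{\mathcal{F}}(x,y)\|_2\|\nabla_x\ell_{\mathcal{G}}(x,y)\|_2}$. Untargeted transferability: $T_r(\mathcal{F},\mathcal{G},x)=\mathbb{I}[\mathcal{F}(x)=\mathcal{G}(x)=y\ \wedge\ \mathcal{F}(\mathcal{A}_U(x))\neq y\ \wedge\ \mathcal{G}(\mathcal{A}_U(x))\neq y]$. *)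

theory Defs
  imports "HOL-Probability.Probability"
begin

definition in_supp :: "('a::metric_space \<times> 'c) measure \<Rightarrow> 'a \<Rightarrow> 'c \<Rightarrow> bool" where
  "in_supp D x y \<longleftrightarrow> (\<forall>e>0. measure D (ball x e \<times> {y}) > 0)"

definition beta_smooth :: "real \<Rightarrow> ('a::real_normed_vector \<Rightarrow> 'c \<Rightarrow> 'a) \<Rightarrow> bool" where
  "beta_smooth \<beta> g \<longleftrightarrow> (\<forall>x1 x2 y. norm (g x1 y - g x2 y) \<le> \<beta> * norm (x1 - x2))"

text \<open>Upper loss gradient similarity (gF, gG are the input gradients of the losses).\<close>
definition upper_grad_sim :: "('a::real_inner \<Rightarrow> 'c \<Rightarrow> 'a) \<Rightarrow> ('a \<Rightarrow> 'c \<Rightarrow> 'a) \<Rightarrow> real" where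
  "upper_grad_sim gF gG =
     (SUP p\<in>UNIV. (gF (fst p) (snd p) \<bullet> gG (fst p) (snd p)) /
                  (norm (gF (fst p) (snd p)) * norm (gG (fst p) (snd p))))"

definition l_min :: "('a::metric_space \<times> 'c) measure \<Rightarrow> ('a \<Rightarrow> 'c \<Rightarrow> real) \<Rightarrow> ('a \<Rightarrow> 'c \<Rightarrow> real) \<Rightarrow> real" where
  "l_min D lF lG = Inf ({lF x y' | x y y'. in_supp D x y \<and> y' \<noteq> y} \<union>
                        {lG x y' | x y y'. in_supp D x y \<and> y' \<noteq> y})"

definition transfer :: "('a \<Rightarrow> 'c) \<Rightarrow> ('a \<Rightarrow> 'c) \<Rightarrow> ('a \<Rightarrow> 'c \<Rightarrow> 'a) \<Rightarrow> 'a \<Rightarrow> 'c \<Rightarrow> bool" where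
  "transfer F G A x y \<longleftrightarrow> F x = y \<and> G x = y \<and> F (A x y) \<noteq> y \<and> G (A x y) \<noteq> y"

end

theory Submission
  imports Defs
begin

lemma lip_bound:
  fixes l :: "'a::euclidean_space \<Rightarrow> real"
  assumes grad: "\<And>x. GDERIV l x :> g x" and bnd: "\<And>z. norm (g z) \<le> B"
  shows "\<bar>l x' - l x\<bar> \<le> B * norm (x' - x)"
proof -
  have "norm (l x' - l x) \<le> B * norm (x' - x)"
  proof (rule differentiable_bound[where S=UNIV and f'="\<lambda>z k. k \<bullet> g z"])
    show "convex (UNIV::'a set)" by simp
    fix z :: 'a
    show "(l has_derivative (\<lambda>k. k \<bullet> g z)) (at z within UNIV)"
      using grad[of z] by (simp add: gderiv_def)
    show "onorm (\<lambda>k. k \<bullet> g z) \<le> B"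
    proof (rule onorm_le)
      fix k :: 'a
      have "norm (k \<bullet> g z) \<le> norm k * norm (g z)" using Cauchy_Schwarz_ineq2 by simp
      also have "\<dots> \<le> B * norm k" using bnd[of z] by (metis mult.commute mult_left_mono norm_ge_zero)
      finally show "norm (k \<bullet> g z) \<le> B * norm k" .
    qed
  qed auto
  thus ?thesis by simp
qed

lemma taylor_bound:
  fixes l :: "'a::euclidean_space \<Rightarrow> real"
  assumes grad: "\<And>x. GDERIV l x :> g x"
    and lip: "\<And>z1 z2. norm (g z1 - g z2) \<le> \<beta> * norm (z1 - z2)" and b0: "\<beta> \<ge> 0"
  shows "l x' \<le> l x + (x' - x) \<bullet> g x + \<beta> * (norm (x' - x))\<^sup>2"
proof -
  define r where "r = norm (x' - x)"
  define h where "h = (\<lambda>z. l z - z \<bullet> g x)"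
  have "norm (h x' - h x) \<le> (\<beta> * r) * norm (x' - x)"
  proof (rule differentiable_bound[where S="cball x r" and f'="\<lambda>z k. k \<bullet> (g z - g x)"])
    show "convex (cball x r)" by simp
    fix z :: 'a
    assume z: "z \<in> cball x r"
    have d1: "(l has_derivative (\<lambda>k. k \<bullet> g z)) (at z)"
      using grad[of z] by (simp add: gderiv_def)
    have d2: "((\<lambda>z. z \<bullet> g x) has_derivative (\<lambda>k. k \<bullet> g x)) (at z)"
      by (intro derivative_eq_intros) auto
    have "(h has_derivative (\<lambda>k. k \<bullet> g z - k \<bullet> g x)) (at z)"
      unfolding h_def by (rule has_derivative_diff[OF d1 d2])
    thus "(h has_derivative (\<lambda>k. k \<bullet> (g z - g x))) (at z within cball x r)"
      by (simp add: inner_diff_right has_derivative_at_withinI)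
    show "onorm (\<lambda>k. k \<bullet> (g z - g x)) \<le> \<beta> * r"
    proof (rule onorm_le)
      fix k :: 'a
      have "norm (k \<bullet> (g z - g x)) \<le> norm k * norm (g z - g x)" using Cauchy_Schwarz_ineq2 by simp
      also have "norm (g z - g x) \<le> \<beta> * r"
      proof -
        have "norm (g z - g x) \<le> \<beta> * norm (z - x)" by (rule lip)
        also have "\<dots> \<le> \<beta> * r" using z b0 by (simp add: dist_norm norm_minus_commute mult_left_mono)
        finally show ?thesis .
      qed
      hence "norm k * norm (g z - g x) \<le> norm k * (\<beta> * r)" by (simp add: mult_left_mono)
      finally show "norm (k \<bullet> (g z - g x)) \<le> \<beta> * r * norm k" by (simp add: mult.commute)
    qed
  next
    show "x' \<in> cball x r" by (simp add: r_def dist_norm norm_minus_commute)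
    show "x \<in> cball x r" by (simp add: r_def)
  qed
  hence "\<bar>l x' - l x - (x' - x) \<bullet> g x\<bar> \<le> \<beta> * r * r"
    by (simp add: h_def r_def inner_diff_left algebra_simps)
  thus ?thesis by (simp add: r_def power2_eq_square)
qed

lemma vec_lemma:
  fixes a b d :: "'a::real_inner"
  assumes na: "norm a \<le> B" and nb: "norm b \<le> B" and nd: "norm d \<le> \<epsilon>"
    and S1: "S \<ge> -1" and cos: "(a \<bullet> b) / (norm a * norm b) \<le> S"
    and s_def: "s = sqrt ((1 + S) / 2)"
    and u: "d \<bullet> a > \<epsilon> * B * s" and v: "d \<bullet> b > \<epsilon> * B * s"
  shows False
proof -
  have e0: "\<epsilon> \<ge> 0" using nd norm_ge_zero order_trans by blast
  have B0: "B \<ge> 0" using na norm_ge_zero order_trans by blast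
  have s0: "s \<ge> 0" using s_def S1 by simp
  have ss: "s\<^sup>2 = (1 + S) / 2" using s_def S1 by (simp add: real_sqrt_pow2 del: real_sqrt_le_0_iff)
  have "\<epsilon> * B * s \<ge> 0" using e0 B0 s0 by simp
  hence u0: "d \<bullet> a > 0" and v0: "d \<bullet> b > 0" using u v by linarith+
  hence a0: "a \<noteq> 0" and b0: "b \<noteq> 0" and d0: "d \<noteq> 0" by auto
  hence Bp: "B > 0" using na by (metis zero_less_norm_iff order_less_le_trans)
  define ah where "ah = a /\<^sub>R norm a"
  define bh where "bh = b /\<^sub>R norm b"
  have "d \<bullet> ah > norm d * s"
  proof -
    have "d \<bullet> ah = (d \<bullet> a) / norm a" by (simp add: ah_def divide_inverse mult.commute)
    also have "\<dots> \<ge> (d \<bullet> a) / B" using u0 na a0 by (intro divide_left_mono) (auto intro!: mult_pos_pos simp: Bp)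
    finally have "d \<bullet> ah \<ge> (d \<bullet> a) / B" .
    moreover have "(d \<bullet> a) / B > \<epsilon> * s" using u Bp by (simp add: field_simps)
    moreover have "\<epsilon> * s \<ge> norm d * s" using nd s0 by (simp add: mult_right_mono)
    ultimately show ?thesis by linarith
  qed
  moreover have "d \<bullet> bh > norm d * s"
  proof -
    have "d \<bullet> bh = (d \<bullet> b) / norm b" by (simp add: bh_def divide_inverse mult.commute)
    also have "\<dots> \<ge> (d \<bullet> b) / B" using v0 nb b0 by (intro divide_left_mono) (auto intro!: mult_pos_pos simp: Bp)
    finally have "d \<bullet> bh \<ge> (d \<bullet> b) / B" .
    moreover have "(d \<bullet> b) / B > \<epsilon> * s" using v Bp by (simp add: field_simps)
    moreover have "\<epsilon> * s \<ge> norm d * s" using nd s0 by (simp add: mult_right_mono)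
    ultimately show ?thesis by linarith
  qed
  ultimately have "d \<bullet> (ah + bh) > norm d * (2 * s)" by (simp add: inner_add_right)
  moreover have "d \<bullet> (ah + bh) \<le> norm d * norm (ah + bh)" by (rule norm_cauchy_schwarz)
  ultimately have "norm d * (2 * s) < norm d * norm (ah + bh)" by linarith
  hence lt: "2 * s < norm (ah + bh)" using d0 by (simp add: mult_less_cancel_left)
  have "(2 * s)\<^sup>2 < (norm (ah + bh))\<^sup>2" using lt s0 by (intro power_strict_mono) auto
  moreover have "(norm (ah + bh))\<^sup>2 = 2 + 2 * (ah \<bullet> bh)"
  proof -
    have n1: "ah \<bullet> ah = 1" "bh \<bullet> bh = 1" using a0 b0
      by (simp_all add: ah_def bh_def flip: power2_norm_eq_inner)
    show ?thesis unfolding power2_norm_eq_inner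
      by (simp add: inner_add_left inner_add_right n1 inner_commute)
  qed
  moreover have "ah \<bullet> bh = (a \<bullet> b) / (norm a * norm b)"
    by (simp add: ah_def bh_def field_simps)
  ultimately have "4 * s\<^sup>2 < 2 + 2 * S" using cos by (simp add: power_mult_distrib)
  thus False using ss by simp
qed

lemma null_outside:
  fixes D :: "('a::euclidean_space \<times> 'c) measure" and y :: 'c
  assumes D: "prob_space D"
    and sets_D: "sets D = sets (borel \<Otimes>\<^sub>M count_space UNIV)"
  shows "{x. \<not> in_supp D x y} \<times> {y} \<in> null_sets D"
proof -
  interpret prob_space D by (rule D)
  have meas: "\<And>x e. ball x e \<times> {y} \<in> sets D"
    unfolding sets_D by (intro pair_measureI) auto
  define \<F> where "\<F> = {ball x e | x e. e > 0 \<and> measure D (ball x e \<times> {y}) = 0}"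
  have opn: "\<And>S. S \<in> \<F> \<Longrightarrow> open S" unfolding \<F>_def by auto
  obtain \<F>' where F': "\<F>' \<subseteq> \<F>" "countable \<F>'" "\<Union>\<F>' = \<Union>\<F>"
    using Lindelof[of \<F>, OF opn] by blast
  have eq: "\<Union>\<F> = {x. \<not> in_supp D x y}"
  proof
    show "\<Union>\<F> \<subseteq> {x. \<not> in_supp D x y}"
    proof
      fix z assume "z \<in> \<Union>\<F>"
      then obtain x e where e: "e > 0" "measure D (ball x e \<times> {y}) = 0" "z \<in> ball x e"
        unfolding \<F>_def by auto
      define r where "r = e - dist x z"
      have r: "r > 0" using e by (simp add: r_def)
      have "ball z r \<subseteq> ball x e" unfolding r_def
      proof
        fix w assume "w \<in> ball z (e - dist x z)"
        hence "dist z w < e - dist x z" by simp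
        moreover have "dist x w \<le> dist x z + dist z w" by (rule dist_triangle)
        ultimately show "w \<in> ball x e" by (simp add: r_def)
      qed
      hence "measure D (ball z r \<times> {y}) \<le> measure D (ball x e \<times> {y})"
        by (intro finite_measure_mono meas) auto
      with e have "measure D (ball z r \<times> {y}) \<le> 0" by simp
      hence "\<not> measure D (ball z r \<times> {y}) > 0" by simp
      thus "z \<in> {x. \<not> in_supp D x y}" using r unfolding in_supp_def by blast
    qed
  next
    show "{x. \<not> in_supp D x y} \<subseteq> \<Union>\<F>"
    proof
      fix z assume "z \<in> {x. \<not> in_supp D x y}"
      then obtain e where e: "e > 0" "\<not> measure D (ball z e \<times> {y}) > 0"
        unfolding in_supp_def by auto
      hence "measure D (ball z e \<times> {y}) = 0" using measure_nonneg[of D] by (simp add: order_antisym)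
      hence "ball z e \<in> \<F>" using e(1) unfolding \<F>_def by blast
      moreover have "z \<in> ball z e" using e(1) by simp
      ultimately show "z \<in> \<Union>\<F>" by blast
    qed
  qed
  have "(\<Union>U\<in>\<F>'. U \<times> {y}) \<in> null_sets D"
  proof (rule null_sets_UN')
    show "countable \<F>'" by (rule F')
    fix U assume "U \<in> \<F>'"
    then obtain x e where U: "U = ball x e" "measure D (ball x e \<times> {y}) = 0"
      using F'(1) unfolding \<F>_def by auto
    show "U \<times> {y} \<in> null_sets D"
      using U meas[of x e] by (simp add: emeasure_eq_measure null_sets_def)
  qed
  moreover have "(\<Union>U\<in>\<F>'. U \<times> {y}) = {x. \<not> in_supp D x y} \<times> {y}"
  proof -
    have "(\<Union>U\<in>\<F>'. U \<times> {y}) = (\<Union>\<F>') \<times> {y}" by auto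
    thus ?thesis using F'(3) eq by simp
  qed
  ultimately show ?thesis by simp
qed


lemma one_side:
  fixes l :: "'a::euclidean_space \<Rightarrow> 'c \<Rightarrow> real" and M :: "'a \<Rightarrow> 'c"
  assumes grad: "\<And>x y. GDERIV (\<lambda>z. l z y) x :> g x y"
    and bnd: "\<And>x y. norm (g x y) \<le> B"
    and sm: "beta_smooth \<beta> g" and b0: "\<beta> \<ge> 0"
    and argmin: "\<And>x y. l x (M x) \<le> l x y"
    and Lle: "\<And>y1. y1 \<noteq> y \<Longrightarrow> L \<le> l x y1"
    and ne: "M x' \<noteq> y" and nd: "norm (x' - x) \<le> \<epsilon>"
  shows "l x y \<ge> L - \<epsilon> * B - \<beta> * \<epsilon>\<^sup>2 - (x' - x) \<bullet> g x y"
proof -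
  define y1 where "y1 = M x'"
  have "\<bar>l x' y1 - l x y1\<bar> \<le> B * norm (x' - x)"
    by (rule lip_bound[where l="\<lambda>z. l z y1" and g="\<lambda>z. g z y1"]) (auto intro: grad bnd)
  moreover have "B * norm (x' - x) \<le> B * \<epsilon>"
    using nd bnd[of x y] by (meson mult_left_mono norm_ge_zero order_trans)
  moreover have "L \<le> l x y1" using Lle ne y1_def by simp
  moreover have "l x' y1 \<le> l x' y" unfolding y1_def by (rule argmin)
  moreover have "l x' y \<le> l x y + (x' - x) \<bullet> g x y + \<beta> * (norm (x' - x))\<^sup>2"
    by (rule taylor_bound[where l="\<lambda>z. l z y" and g="\<lambda>z. g z y"])
       (use grad sm b0 in \<open>auto simp: beta_smooth_def\<close>)
  moreover have "\<beta> * (norm (x' - x))\<^sup>2 \<le> \<beta> * \<epsilon>\<^sup>2"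
    using nd b0 by (intro mult_left_mono power_mono) auto
  ultimately show ?thesis by (simp add: algebra_simps abs_le_iff)
qed

theorem theorem4:
  fixes D :: "('a::euclidean_space \<times> 'c::finite) measure"
    and lF lG :: "'a \<Rightarrow> 'c \<Rightarrow> real"
    and gF gG :: "'a \<Rightarrow> 'c \<Rightarrow> 'a"
    and F G :: "'a \<Rightarrow> 'c"
    and A :: "'a \<Rightarrow> 'c \<Rightarrow> 'a"
    and \<alpha> \<beta> B \<epsilon> :: real
  assumes D: "prob_space D"
    and sets_D: "sets D = sets (borel \<Otimes>\<^sub>M count_space UNIV)"
    and nonnegF: "\<And>x y. lF x y \<ge> 0"
    and nonnegG: "\<And>x y. lG x y \<ge> 0"
    and gradF: "\<And>x y. GDERIV (\<lambda>z. lF z y) x :> gF x y"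
    and gradG: "\<And>x y. GDERIV (\<lambda>z. lG z y) x :> gG x y"
    and F_argmin: "\<And>x y. lF x (F x) \<le> lF x y"
    and G_argmin: "\<And>x y. lG x (G x) \<le> lG x y"
    and F_meas: "F \<in> borel \<rightarrow>\<^sub>M count_space UNIV"
    and G_meas: "G \<in> borel \<rightarrow>\<^sub>M count_space UNIV"
    and intF: "integrable D (\<lambda>(x, y). lF x y)"
    and intG: "integrable D (\<lambda>(x, y). lG x y)"
    and smoothF: "beta_smooth \<beta> gF"
    and smoothG: "beta_smooth \<beta> gG"
    and boundF: "\<And>x y. norm (gF x y) \<le> B"
    and boundG: "\<And>x y. norm (gG x y) \<le> B"
    and A_meas: "(\<lambda>(x, y). A x y) \<in> D \<rightarrow>\<^sub>M borel"
    and A_ball: "\<And>x y. norm (A x y - x) \<le> \<epsilon>"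
    and A_eff: "measure D {(x, y) \<in> space D. F (A x y) \<noteq> y} \<ge> 1 - \<alpha>"
    and denom_pos: "l_min D lF lG - \<epsilon> * B * (1 + sqrt ((1 + upper_grad_sim gF gG) / 2))
                      - \<beta> * \<epsilon>\<^sup>2 > 0"
  shows "measure D {(x, y) \<in> space D. transfer F G A x y}
         \<le> ((\<integral>p. lF (fst p) (snd p) \<partial>D) + (\<integral>p. lG (fst p) (snd p) \<partial>D)) /
           (l_min D lF lG - \<epsilon> * B * (1 + sqrt ((1 + upper_grad_sim gF gG) / 2))
              - \<beta> * \<epsilon>\<^sup>2)"
  proof -
  interpret prob_space D by (rule D)
  define S where "S = upper_grad_sim gF gG"
  define s where "s = sqrt ((1 + S) / 2)"
  define L where "L = l_min D lF lG"
  define d where "d = L - \<epsilon> * B * (1 + s) - \<beta> * \<epsilon>\<^sup>2"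
  have dpos: "d > 0" using denom_pos by (simp add: d_def L_def s_def S_def)
  have e0: "\<epsilon> \<ge> 0" using order_trans[OF norm_ge_zero A_ball] by blast
  have B0: "B \<ge> 0" using order_trans[OF norm_ge_zero boundF] by blast
  have b0: "\<beta> \<ge> 0"
  proof -
    define b :: 'a where "b = (SOME i. i \<in> Basis)"
    have "b \<in> Basis" unfolding b_def by (rule SOME_Basis)
    hence nb: "norm b = 1" by simp
    have "norm (gF b undefined - gF 0 undefined) \<le> \<beta> * norm (b - 0)"
      using smoothF unfolding beta_smooth_def by blast
    thus ?thesis using nb by (metis diff_zero mult.right_neutral norm_ge_zero order_trans)
  qed
  define cs where "cs = (\<lambda>p. (gF (fst p) (snd p) \<bullet> gG (fst p) (snd p)) /
                  (norm (gF (fst p) (snd p)) * norm (gG (fst p) (snd p))))"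
  have cs_bnd: "-1 \<le> cs p \<and> cs p \<le> 1" for p
  proof -
    let ?a = "gF (fst p) (snd p)" and ?b = "gG (fst p) (snd p)"
    have cs: "\<bar>?a \<bullet> ?b\<bar> \<le> norm ?a * norm ?b" by (rule Cauchy_Schwarz_ineq2)
    have eq: "\<bar>(?a \<bullet> ?b) / (norm ?a * norm ?b)\<bar> = \<bar>?a \<bullet> ?b\<bar> / (norm ?a * norm ?b)"
      by (simp add: abs_divide)
    have "\<bar>?a \<bullet> ?b\<bar> / (norm ?a * norm ?b) \<le> 1"
    proof (cases "norm ?a * norm ?b = 0")
      case True thus ?thesis by (metis div_by_0 zero_le_one)
    next
      case False
      hence "norm ?a * norm ?b > 0" by (simp add: order_less_le)
      thus ?thesis using cs by (simp add: divide_le_eq_1_pos)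
    qed
    hence "\<bar>cs p\<bar> \<le> 1" unfolding cs_def using eq by simp
    thus ?thesis by (simp add: abs_le_iff)
  qed
  have S_eq: "S = (SUP p\<in>UNIV. cs p)" unfolding S_def upper_grad_sim_def cs_def by (rule refl)
  have bdd: "bdd_above (range cs)" by (rule bdd_aboveI2[where M=1]) (use cs_bnd in blast)
  have cs_le: "cs p \<le> S" for p unfolding S_eq by (rule cSUP_upper[OF UNIV_I bdd])
  have S1: "S \<ge> -1" using cs_bnd[of "(0, undefined)"] cs_le[of "(0, undefined)"] by linarith
  have Lle: "L \<le> lF x y1" "L \<le> lG x y1" if "in_supp D x y" "y1 \<noteq> y" for x y y1
  proof -
    let ?X = "{lF x y' | x y y'. in_supp D x y \<and> y' \<noteq> y} \<union>
                        {lG x y' | x y y'. in_supp D x y \<and> y' \<noteq> y}"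
    have bb: "bdd_below ?X" using nonnegF nonnegG by (intro bdd_belowI[of _ 0]) auto
    have "lF x y1 \<in> ?X" "lG x y1 \<in> ?X" using that by blast+
    thus "L \<le> lF x y1" "L \<le> lG x y1" unfolding L_def l_min_def using cInf_lower[OF _ bb] by auto
  qed
  have key: "d \<le> lF x y + lG x y"
    if sup: "in_supp D x y" and nF: "F (A x y) \<noteq> y" and nG: "G (A x y) \<noteq> y" for x y
  proof (rule ccontr)
    assume neg: "\<not> d \<le> lF x y + lG x y"
    define \<delta> where "\<delta> = A x y - x"
    have nd: "norm \<delta> \<le> \<epsilon>" unfolding \<delta>_def by (rule A_ball)
    have lowF: "lF x y \<ge> L - \<epsilon> * B - \<beta> * \<epsilon>\<^sup>2 - \<delta> \<bullet> gF x y"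
      unfolding \<delta>_def
      by (rule one_side[where M=F]) (use gradF boundF smoothF b0 F_argmin Lle(1)[OF sup] nF A_ball in auto)
    have lowG: "lG x y \<ge> L - \<epsilon> * B - \<beta> * \<epsilon>\<^sup>2 - \<delta> \<bullet> gG x y"
      unfolding \<delta>_def
      by (rule one_side[where M=G]) (use gradG boundG smoothG b0 G_argmin Lle(2)[OF sup] nG A_ball in auto)
    have dd: "d = L - \<epsilon> * B - \<beta> * \<epsilon>\<^sup>2 - \<epsilon> * B * s" unfolding d_def by (simp add: algebra_simps)
    have u: "\<delta> \<bullet> gF x y > \<epsilon> * B * s" using neg lowF nonnegG[of x y] dd by linarith
    have v: "\<delta> \<bullet> gG x y > \<epsilon> * B * s" using neg lowG nonnegF[of x y] dd by linarith
    show False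
      using vec_lemma[OF boundF boundG nd S1 _ s_def u v] cs_le[of "(x, y)"] unfolding cs_def by simp
  qed
  let ?T = "{(x, y) \<in> space D. transfer F G A x y}"
  let ?f = "\<lambda>p. lF (fst p) (snd p) + lG (fst p) (snd p)"
  have intF': "integrable D (\<lambda>p. lF (fst p) (snd p))" using intF by (simp add: case_prod_beta')
  have intG': "integrable D (\<lambda>p. lG (fst p) (snd p))" using intG by (simp add: case_prod_beta')
  have int0: "0 \<le> (\<integral>p. lF (fst p) (snd p) \<partial>D) + (\<integral>p. lG (fst p) (snd p) \<partial>D)"
    using nonnegF nonnegG by (simp add: add_nonneg_nonneg)
  have goal: "measure D ?T \<le> ((\<integral>p. lF (fst p) (snd p) \<partial>D) + (\<integral>p. lG (fst p) (snd p) \<partial>D)) / d"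
  proof (cases "?T \<in> sets D")
    case False
    hence "measure D ?T = 0" by (rule measure_notin_sets)
    thus ?thesis using int0 dpos by simp
  next
    case True
    define N where "N = (\<Union>y\<in>UNIV. {x. \<not> in_supp D x y} \<times> {y})"
    have Nnull: "N \<in> null_sets D" unfolding N_def
      by (rule null_sets_UN') (auto intro: null_outside[OF D sets_D] countable_finite)
    define Sset where "Sset = {p \<in> space D. d \<le> ?f p}"
    have fm: "?f \<in> borel_measurable D" using intF' intG' by auto
    have Sm: "Sset \<in> sets D" unfolding Sset_def using fm by measurable
    have sub: "?T \<subseteq> Sset \<union> N"
    proof
      fix p assume p: "p \<in> ?T"
      obtain x y where xy: "p = (x, y)" by force
      show "p \<in> Sset \<union> N"
      proof (cases "in_supp D x y")
        case True
        thus ?thesis using key[OF True] p xy unfolding Sset_def transfer_def by auto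
      next
        case False
        thus ?thesis using xy unfolding N_def by auto
      qed
    qed
    have "measure D ?T \<le> measure D (Sset \<union> N)"
      using sub Sm Nnull by (intro finite_measure_mono) auto
    also have "\<dots> = measure D Sset" using Sm Nnull by (rule measure_Un_null_set)
    also have "\<dots> \<le> (\<integral>p. ?f p \<partial>D) / d" unfolding Sset_def
      by (rule integral_Markov_inequality_measure[where A="space D"])
         (use intF' intG' dpos nonnegF nonnegG in \<open>auto intro: add_nonneg_nonneg\<close>)
    also have "(\<integral>p. ?f p \<partial>D) = (\<integral>p. lF (fst p) (snd p) \<partial>D) + (\<integral>p. lG (fst p) (snd p) \<partial>D)"
      by (rule Bochner_Integration.integral_add[OF intF' intG'])
    finally show ?thesis .
  qed
  thus ?thesis by (simp add: d_def L_def s_def S_def)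
qed

end
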